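(* Let $\mathcal{B}$ be a unital C$^*$-algebra. For $i=1,2$ let $\mathfrak{T}^i$ be a spatial CPD-semigroup on a set $S^i$ with values in $\mathcal{B}(\mathcal{B})$, with unit $\mathfrak{S}^i$ given by $(\mathfrak{S}^i_t)^{s,s'}(b)=(c^{i,s}_t)^*b\,c^{i,s'}_t$ for a family $(c^{i,s})_{s\in S^i}$ of continuous semigroups in $\mathcal{B}$. On the disjoint union $S=S^1\uplus S^2$ define $\mathfrak{T}=\mathfrak{T}^1\boxplus\mathfrak{T}^2$ by $\mathfrak{T}^{s,s'}_t:=(\mathfrak{T}^i_t)^{s,s'}$ for $s,s'\in S^i$ ($i=1,2$), and $\mathfrak{T}^{s_i,s_j}_t(b):=(c^{i,s_i}_t)^*b\,c^{j,s_j}_t$ for $i\neq j$, $s_i\in S^i$, $s_j\in S^j$; define $\mathfrak{S}=\mathfrak{S}^1\boxplus\mathfrak{S}^2$ by the same formulas with $\mathfrak{S}^i$ in place of $\mathfrak{T}^i$. Then $\mathfrak{T}$ is a spatial CPD-semigroup with unit $\mathfrak{S}$. Moreover, $\mathfrak{T}$ is (strongly) continuous if and only if each $\mathfrak{T}^i$ is (strongly) continuous.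
   Context: A kernel $\mathfrak{K}:S\times S\to\mathcal{B}(\mathcal{B})$ is completely positive definite (CPD) if $\sum_{i,j}b_i^*\mathfrak{K}^{s_i,s_j}(a_i^*a_j)b_j\ge0$ for all finite choices $s_i\in S$, $a_i,b_i\in\mathcal{B}$. A CPD-semigroup on $S$ is a family $(\mathfrak{T}_t)_{t\ge0}$ of $\mathcal{B}(\mathcal{B})$-valued CPD-kernels on $S$ such that each $(\mathfrak{T}^{s,s'}_t)_{t\ge0}$ is a semigroup of maps on $\mathcal{B}$; strongly continuous means $t\mapsto\mathfrak{T}^{s,s'}_t(b)$ is norm continuous for all $s,s',b$. $\mathfrak{T}$ dominates $\mathfrak{S}$ if $\mathfrak{T}_t-\mathfrak{S}_t$ is CPD for all $t$. $\mathfrak{S}$ is elementary if $\mathfrak{S}^{s,s'}_t(b)=c^{s*}_tbc^{s'}_t$ for a family of continuous semigroups $(c^s_t)_{t\ge0}$ in $\mathcal{B}$. A unit for $\mathfrak{T}$ is an elementary CPD-semigroup dominated by $\mathfrak{T}$; $\mathfrak{T}$ is spatial if it has a unit. *)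

theory Defs
  imports "HOL-Analysis.Analysis"
begin

text \<open>The complex scalar multiplication is the parameter scaleC;
  the real Banach space structure is the underlying real structure. The unit need not be
  nonzero (the zero algebra is allowed).\<close>

class unital_cstar_algebra = real_normed_algebra + monoid_mult + banach +
  fixes cstar :: "'a \<Rightarrow> 'a"
    and scaleC :: "complex \<Rightarrow> 'a \<Rightarrow> 'a"
  assumes scaleC_of_real: "scaleC (complex_of_real r) x = scaleR r x"
    and scaleC_add_left: "scaleC (\<alpha> + \<beta>) x = scaleC \<alpha> x + scaleC \<beta> x"
    and scaleC_add_right: "scaleC \<alpha> (x + y) = scaleC \<alpha> x + scaleC \<alpha> y"
    and scaleC_scaleC: "scaleC \<alpha> (scaleC \<beta> x) = scaleC (\<alpha> * \<beta>) x"
    and norm_scaleC: "norm (scaleC \<alpha> x) = cmod \<alpha> * norm x"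
    and scaleC_mult_left: "scaleC \<alpha> x * y = scaleC \<alpha> (x * y)"
    and scaleC_mult_right: "x * scaleC \<alpha> y = scaleC \<alpha> (x * y)"
    and cstar_cstar: "cstar (cstar x) = x"
    and cstar_add: "cstar (x + y) = cstar x + cstar y"
    and cstar_scaleC: "cstar (scaleC \<alpha> x) = scaleC (cnj \<alpha>) (cstar x)"
    and cstar_mult: "cstar (x * y) = cstar y * cstar x"
    and cstar_identity: "norm (cstar x * x) = (norm x)\<^sup>2"

definition positive :: "'a::unital_cstar_algebra \<Rightarrow> bool" where
  "positive b \<longleftrightarrow> (\<exists>x. b = cstar x * x)"

definition bounded_clinear_map :: "('a::unital_cstar_algebra \<Rightarrow> 'a) \<Rightarrow> bool" where
  "bounded_clinear_map f \<longleftrightarrow>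
     (\<forall>x y. f (x + y) = f x + f y) \<and> (\<forall>\<alpha> x. f (scaleC \<alpha> x) = scaleC \<alpha> (f x)) \<and>
     (\<exists>K. \<forall>x. norm (f x) \<le> K * norm x)"

definition CPD_kernel :: "('s \<Rightarrow> 's \<Rightarrow> 'a::unital_cstar_algebra \<Rightarrow> 'a) \<Rightarrow> bool" where
  "CPD_kernel K \<longleftrightarrow>
     (\<forall>s s'. bounded_clinear_map (K s s')) \<and>
     (\<forall>(n::nat) (s::nat \<Rightarrow> 's) (a::nat \<Rightarrow> 'a) (b::nat \<Rightarrow> 'a).
        positive (\<Sum>i<n. \<Sum>j<n. cstar (b i) * K (s i) (s j) (cstar (a i) * a j) * b j))"

text \<open>A CPD-semigroup: time parameter t >= 0 (values at negative times are irrelevant).\<close>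
definition CPD_semigroup :: "(real \<Rightarrow> 's \<Rightarrow> 's \<Rightarrow> 'a::unital_cstar_algebra \<Rightarrow> 'a) \<Rightarrow> bool" where
  "CPD_semigroup T \<longleftrightarrow>
     (\<forall>t\<ge>0. CPD_kernel (T t)) \<and>
     (\<forall>s s'. T 0 s s' = id) \<and>
     (\<forall>s s' t u. t \<ge> 0 \<longrightarrow> u \<ge> 0 \<longrightarrow> T (t + u) s s' = T t s s' \<circ> T u s s')"

definition strongly_continuous :: "(real \<Rightarrow> 's \<Rightarrow> 's \<Rightarrow> 'a::unital_cstar_algebra \<Rightarrow> 'a) \<Rightarrow> bool" where
  "strongly_continuous T \<longleftrightarrow> (\<forall>s s' b. continuous_on {0..} (\<lambda>t. T t s s' b))"

definition uniformly_continuous_sg :: "(real \<Rightarrow> 's \<Rightarrow> 's \<Rightarrow> 'a::unital_cstar_algebra \<Rightarrow> 'a) \<Rightarrow> bool" where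
  "uniformly_continuous_sg T \<longleftrightarrow>
     (\<forall>s s'. \<forall>t0\<ge>0. ((\<lambda>t. onorm (\<lambda>b. T t s s' b - T t0 s s' b)) \<longlongrightarrow> 0) (at t0 within {0..}))"

definition dominates :: "(real \<Rightarrow> 's \<Rightarrow> 's \<Rightarrow> 'a::unital_cstar_algebra \<Rightarrow> 'a) \<Rightarrow>
    (real \<Rightarrow> 's \<Rightarrow> 's \<Rightarrow> 'a \<Rightarrow> 'a) \<Rightarrow> bool" where
  "dominates T S \<longleftrightarrow> (\<forall>t\<ge>0. CPD_kernel (\<lambda>s s' b. T t s s' b - S t s s' b))"

definition cont_semigroup :: "(real \<Rightarrow> 'a::unital_cstar_algebra) \<Rightarrow> bool" where
  "cont_semigroup c \<longleftrightarrow> c 0 = 1 \<and> (\<forall>t u. t \<ge> 0 \<longrightarrow> u \<ge> 0 \<longrightarrow> c (t + u) = c t * c u)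
     \<and> continuous_on {0..} c"

definition elem_kernel :: "('s \<Rightarrow> real \<Rightarrow> 'a::unital_cstar_algebra) \<Rightarrow> real \<Rightarrow> 's \<Rightarrow> 's \<Rightarrow> 'a \<Rightarrow> 'a" where
  "elem_kernel c t s s' b = cstar (c s t) * b * c s' t"

definition elementary :: "(real \<Rightarrow> 's \<Rightarrow> 's \<Rightarrow> 'a::unital_cstar_algebra \<Rightarrow> 'a) \<Rightarrow> bool" where
  "elementary S \<longleftrightarrow> CPD_semigroup S \<and>
     (\<exists>c. (\<forall>s. cont_semigroup (c s)) \<and> (\<forall>t\<ge>0. S t = elem_kernel c t))"

definition is_CPD_unit :: "(real \<Rightarrow> 's \<Rightarrow> 's \<Rightarrow> 'a::unital_cstar_algebra \<Rightarrow> 'a) \<Rightarrow>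
    (real \<Rightarrow> 's \<Rightarrow> 's \<Rightarrow> 'a \<Rightarrow> 'a) \<Rightarrow> bool" where
  "is_CPD_unit T S \<longleftrightarrow> elementary S \<and> dominates T S"

definition spatial :: "(real \<Rightarrow> 's \<Rightarrow> 's \<Rightarrow> 'a::unital_cstar_algebra \<Rightarrow> 'a) \<Rightarrow> bool" where
  "spatial T \<longleftrightarrow> CPD_semigroup T \<and> (\<exists>S. is_CPD_unit T S)"

definition boxplus :: "(real \<Rightarrow> 's1 \<Rightarrow> 's1 \<Rightarrow> 'a::unital_cstar_algebra \<Rightarrow> 'a) \<Rightarrow>
    (real \<Rightarrow> 's2 \<Rightarrow> 's2 \<Rightarrow> 'a \<Rightarrow> 'a) \<Rightarrow> ('s1 \<Rightarrow> real \<Rightarrow> 'a) \<Rightarrow> ('s2 \<Rightarrow> real \<Rightarrow> 'a) \<Rightarrow>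
    real \<Rightarrow> 's1 + 's2 \<Rightarrow> 's1 + 's2 \<Rightarrow> 'a \<Rightarrow> 'a" where
  "boxplus T1 T2 c1 c2 t x y b =
     (case (x, y) of
        (Inl s, Inl s') \<Rightarrow> T1 t s s' b
      | (Inr s, Inr s') \<Rightarrow> T2 t s s' b
      | _ \<Rightarrow> cstar (case_sum c1 c2 x t) * b * case_sum c1 c2 y t)"

end

theory Submission
  imports Defs "HOL-Computational_Algebra.Formal_Power_Series"
begin


lemma cstar_zero[simp]: "cstar 0 = (0::'a::unital_cstar_algebra)"
  using cstar_add[of 0 0] by simp
lemma cstar_minus: "cstar (- x) = - cstar (x::'a::unital_cstar_algebra)"
proof -
  have "cstar x + cstar (-x) = 0" using cstar_add[of x "-x"] by simp
  then show ?thesis by (rule minus_unique[symmetric])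
qed
lemma cstar_diff: "cstar (x - y) = cstar x - cstar y"
  using cstar_add[of x "-y"] cstar_minus[of y] by simp
lemma cstar_one[simp]: "cstar 1 = (1::'a::unital_cstar_algebra)"
proof -
  have "(1::'a) = cstar (cstar 1)" by (simp add: cstar_cstar)
  also have "\<dots> = cstar (cstar 1 * 1)" by simp
  also have "\<dots> = cstar 1 * 1" by (simp only: cstar_mult cstar_cstar)
  finally show ?thesis by simp
qed
lemma scaleC_zero_left[simp]: "scaleC 0 x = (0::'a::unital_cstar_algebra)"
  using scaleC_of_real[of 0 x] by simp
lemma scaleC_one[simp]: "scaleC 1 x = (x::'a::unital_cstar_algebra)"
  using scaleC_of_real[of 1 x] by simp
lemma scaleC_zero_right[simp]: "scaleC a 0 = (0::'a::unital_cstar_algebra)"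
  using scaleC_add_right[of a 0 0] by simp
lemma scaleC_minus_right: "scaleC a (- x) = - scaleC a (x::'a::unital_cstar_algebra)"
proof -
  have "scaleC a x + scaleC a (-x) = 0" using scaleC_add_right[of a x "-x"] by simp
  then show ?thesis by (rule minus_unique[symmetric])
qed
lemma scaleC_diff_right: "scaleC a (x - y) = scaleC a x - scaleC a (y::'a::unital_cstar_algebra)"
  using scaleC_add_right[of a x "-y"] scaleC_minus_right[of a y] by simp
lemma scaleC_minus_left: "scaleC (- a) x = - scaleC a (x::'a::unital_cstar_algebra)"
proof -
  have "scaleC a x + scaleC (-a) x = 0" using scaleC_add_left[of a "-a" x] by simp
  then show ?thesis by (rule minus_unique[symmetric])
qed
lemma cstar_scaleR: "cstar (scaleR r x) = scaleR r (cstar (x::'a::unital_cstar_algebra))"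
  using cstar_scaleC[of "complex_of_real r" x] by (simp add: scaleC_of_real)
lemma norm_cstar_le: "norm x \<le> norm (cstar (x::'a::unital_cstar_algebra))"
proof -
  have "(norm x)\<^sup>2 \<le> norm (cstar x) * norm x"
    using cstar_identity[of x] norm_mult_ineq[of "cstar x" x] by simp
  show ?thesis
  proof (cases "norm x = 0")
    case True then show ?thesis by simp
  next
    case False then have "norm x > 0" by simp
    then show ?thesis using \<open>(norm x)\<^sup>2 \<le> norm (cstar x) * norm x\<close>
      mult_right_le_imp_le[of "norm x" "norm x" "norm (cstar x)"] by (simp add: power2_eq_square)
  qed
qed
lemma norm_cstar[simp]: "norm (cstar x) = norm (x::'a::unital_cstar_algebra)"
  using norm_cstar_le[of x] norm_cstar_le[of "cstar x"] by (simp add: cstar_cstar)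
lemma norm_one_le: "norm (1::'a::unital_cstar_algebra) \<le> 1"
proof -
  have "norm (1::'a) = (norm (1::'a::unital_cstar_algebra))\<^sup>2" using cstar_identity[of "1::'a"] by simp
  then have "norm (1::'a) * (norm (1::'a) - 1) = 0" by (simp add: power2_eq_square algebra_simps)
  then have "norm (1::'a) = 0 \<or> norm (1::'a) = 1" by simp
  then show ?thesis by auto
qed
lemma bounded_linear_cstar: "bounded_linear (cstar::'a::unital_cstar_algebra\<Rightarrow>'a)"
  by (rule bounded_linear_intro[of _ 1]) (auto simp: cstar_add cstar_scaleR)
lemma cstar_power: "cstar (x ^ n) = cstar (x::'a::unital_cstar_algebra) ^ n"
  by (induction n) (simp_all add: cstar_mult power_Suc2 del: power_Suc, metis power_commutes)
lemma cstar_sum: "cstar (sum f A) = sum (\<lambda>i. cstar (f i::'a::unital_cstar_algebra)) A"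
  by (induction A rule: infinite_finite_induct) (auto simp: cstar_add)
lemma norm_power_le: "norm (x ^ n) \<le> norm (x::'a::unital_cstar_algebra) ^ n"
proof (induction n)
  case 0 then show ?case using norm_one_le by simp
next
  case (Suc n)
  have "norm (x ^ Suc n) \<le> norm x * norm (x ^ n)" by (simp add: norm_mult_ineq)
  also have "\<dots> \<le> norm x * norm x ^ n" using Suc by (simp add: mult_left_mono)
  finally show ?case by simp
qed
lemma sa_norm_sq: "cstar h = (h::'a::unital_cstar_algebra) \<Longrightarrow> norm (h * h) = (norm h)\<^sup>2"
  using cstar_identity[of h] by simp
lemma sa_norm_pow2: "cstar h = (h::'a::unital_cstar_algebra) \<Longrightarrow> norm (h ^ (2 ^ k)) = norm h ^ (2 ^ k)"
proof (induction k)
  case 0 then show ?case by simp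
next
  case (Suc k)
  have sa: "cstar (h ^ (2^k)) = h ^ (2^k)" using Suc.prems by (simp add: cstar_power)
  have "h ^ (2 ^ Suc k) = h ^ (2^k) * h ^ (2^k)" by (simp add: power_add[symmetric] mult_2)
  then have "norm (h ^ (2 ^ Suc k)) = (norm (h ^ (2^k)))\<^sup>2" using sa_norm_sq[OF sa] by simp
  then show ?case using Suc by (simp add: power_mult[symmetric] mult.commute)
qed


definition beta :: "nat \<Rightarrow> real" where
  "beta k = ((1/2::real) gchoose k) * (-1)^k"

lemma beta_0[simp]: "beta 0 = 1" by (simp add: beta_def)

lemma gchoose_rec: "(a::real) gchoose (Suc k) = (a gchoose k) * (a - real k) / real (Suc k)"
  using gbinomial_mult_1[of a k] by (simp add: field_simps)

lemma beta_rec: "beta (Suc k) = beta k * (real k - 1/2) / real (Suc k)"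
  unfolding beta_def gchoose_rec by (simp add: field_simps)

lemma beta_nonpos: "k \<ge> 1 \<Longrightarrow> beta k \<le> 0"
proof (induction k)
  case 0 then show ?case by simp
next
  case (Suc k)
  show ?case
  proof (cases "k = 0")
    case True then show ?thesis by (simp add: beta_rec)
  next
    case False
    then have "beta k \<le> 0" "real k - 1/2 \<ge> 0" using Suc by auto
    then show ?thesis unfolding beta_rec
      by (simp add: divide_nonpos_pos mult_nonpos_nonneg)
  qed
qed

lemma delta_nonneg: "0 \<le> (-1::real)^m * ((-1/2::real) gchoose m)"
proof (induction m)
  case 0 then show ?case by simp
next
  case (Suc m)
  have "(-1::real)^Suc m * ((-1/2::real) gchoose Suc m) =
        ((-1::real)^m * ((-1/2::real) gchoose m)) * (real m + 1/2) / real (Suc m)"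
    unfolding gchoose_rec by (simp add: field_simps)
  then show ?case using Suc by simp
qed

lemma beta_partial: "(\<Sum>k\<le>m. beta k) \<ge> 0"
proof -
  have "(\<Sum>k\<le>m. beta k) = (-1)^m * ((1/2 - 1::real) gchoose m)"
    unfolding beta_def by (rule gbinomial_sum_lower_neg)
  then show ?thesis using delta_nonneg[of m] by simp
qed

lemma abs_beta_partial: "(\<Sum>k<n. \<bar>beta (Suc k)\<bar>) \<le> 1"
proof -
  have "(\<Sum>k<n. \<bar>beta (Suc k)\<bar>) = (\<Sum>k<n. - beta (Suc k))"
  proof (rule sum.cong[OF refl])
    fix k show "\<bar>beta (Suc k)\<bar> = - beta (Suc k)" using beta_nonpos[of "Suc k"] by simp
  qed
  also have "\<dots> = - (\<Sum>k<n. beta (Suc k))" by (rule sum_negf)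
  finally have eq1: "(\<Sum>k<n. \<bar>beta (Suc k)\<bar>) = - (\<Sum>k<n. beta (Suc k))" .
  have "(\<Sum>k\<le>n. beta k) = 1 + (\<Sum>k<n. beta (Suc k))"
    by (simp add: sum.atMost_shift)
  with eq1 show ?thesis using beta_partial[of n] by linarith
qed

lemma summable_abs_beta_Suc: "summable (\<lambda>k. \<bar>beta (Suc k)\<bar>)"
  by (rule summableI_nonneg_bounded[OF _ abs_beta_partial]) simp

lemma summable_abs_beta: "summable (\<lambda>k. \<bar>beta k\<bar>)"
  using summable_abs_beta_Suc summable_Suc_iff[of "\<lambda>k. \<bar>beta k\<bar>"] by simp

lemma suminf_abs_beta_Suc: "(\<Sum>k. \<bar>beta (Suc k)\<bar>) \<le> 1"
  by (rule suminf_le_const[OF summable_abs_beta_Suc abs_beta_partial])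

lemma beta_conv: "(\<Sum>i\<le>n. beta i * beta (n - i)) = (-1)^n * real (1 choose n)"
proof -
  have "(\<Sum>i\<le>n. beta i * beta (n - i)) =
        (\<Sum>i\<le>n. (-1)^n * (((1/2::real) gchoose i) * ((1/2::real) gchoose (n - i))))"
  proof (rule sum.cong[OF refl])
    fix i assume "i \<in> {..n}"
    then have "(-1::real)^i * (-1)^(n-i) = (-1)^n" by (simp add: power_add[symmetric])
    then show "beta i * beta (n - i) = (-1)^n * (((1/2::real) gchoose i) * ((1/2::real) gchoose (n - i)))"
    proof -
      have "beta i * beta (n - i) = ((-1::real)^i * (-1)^(n-i)) * (((1/2::real) gchoose i) * ((1/2::real) gchoose (n - i)))"
        unfolding beta_def by (simp only: mult_ac)
      then show ?thesis using \<open>(-1::real)^i * (-1)^(n-i) = (-1)^n\<close> by simp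
    qed
  qed
  also have "\<dots> = (-1)^n * (\<Sum>i\<le>n. ((1/2::real) gchoose i) * ((1/2::real) gchoose (n - i)))"
    by (simp add: sum_distrib_left)
  also have "(\<Sum>i\<le>n. ((1/2::real) gchoose i) * ((1/2::real) gchoose (n - i))) = (1::real) gchoose n"
    using gbinomial_Vandermonde[of "1/2::real" "1/2" n] by (simp add: atMost_atLeast0)
  also have "(1::real) gchoose n = real (1 choose n)"
    using binomial_gbinomial[of 1 n, where 'a=real] by simp
  finally show ?thesis .
qed



lemma power_commute_gen:
  fixes z u :: "'a::unital_cstar_algebra"
  assumes "z * u = u * z" shows "z * u ^ k = u ^ k * z"
proof (induction k)
  case 0 then show ?case by simp
next
  case (Suc k)
  have "z * u ^ Suc k = (z * u) * u ^ k" by (simp add: mult.assoc)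
  also have "\<dots> = u * (z * u ^ k)" using assms by (simp add: mult.assoc)
  also have "\<dots> = u * (u ^ k * z)" using Suc by simp
  finally show ?case by (simp add: mult.assoc)
qed

lemma cstar_sqrt_unit:
  fixes p :: "'a::unital_cstar_algebra"
  assumes sa: "cstar p = p" and np: "norm (1 - p) \<le> 1"
  shows "\<exists>r. cstar r = r \<and> r * r = p \<and> norm (1 - r) \<le> 1 \<and> (\<forall>z. z * p = p * z \<longrightarrow> z * r = r * z)"
proof -
  define u where "u = 1 - p"
  have nu: "norm u \<le> 1" using np u_def by simp
  have sau: "cstar u = u" using sa by (simp add: u_def cstar_diff)
  have nuk: "norm (u ^ k) \<le> 1" for k
    using norm_power_le[of u k] nu by (meson order_trans power_le_one norm_ge_zero)
  define f where "f k = beta k *\<^sub>R u ^ k" for k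
  have nf: "norm (f k) \<le> \<bar>beta k\<bar>" for k
    using nuk[of k] by (simp add: f_def mult_left_le)
  have snf: "summable (\<lambda>k. norm (f k))"
    by (rule summable_comparison_test[OF _ summable_abs_beta]) (use nf in auto)
  have sf: "summable f" using snf by (rule summable_norm_cancel)
  define r where "r = suminf f"
  have "cstar r = (\<Sum>k. cstar (f k))"
    unfolding r_def by (rule bounded_linear.suminf[OF bounded_linear_cstar sf])
  also have "(\<lambda>k. cstar (f k)) = f"
    by (rule ext) (simp add: f_def cstar_scaleR cstar_power sau)
  finally have sar: "cstar r = r" by (simp add: r_def)
  have "r * r = (\<Sum>k. \<Sum>i\<le>k. f i * f (k - i))"
    unfolding r_def by (rule Cauchy_product[OF snf snf])
  also have "(\<lambda>k. \<Sum>i\<le>k. f i * f (k - i)) = (\<lambda>k. ((-1)^k * real (1 choose k)) *\<^sub>R u ^ k)"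
  proof (rule ext)
    fix k
    have "(\<Sum>i\<le>k. f i * f (k - i)) = (\<Sum>i\<le>k. (beta i * beta (k - i)) *\<^sub>R u ^ k)"
    proof (rule sum.cong[OF refl])
      fix i assume "i \<in> {..k}"
      then have "u ^ i * u ^ (k - i) = u ^ k" by (simp add: power_add[symmetric])
      then show "f i * f (k - i) = (beta i * beta (k - i)) *\<^sub>R u ^ k"
        by (simp add: f_def)
    qed
    also have "\<dots> = (\<Sum>i\<le>k. beta i * beta (k - i)) *\<^sub>R u ^ k"
      by (simp add: scaleR_sum_left)
    finally show "(\<Sum>i\<le>k. f i * f (k - i)) = ((-1)^k * real (1 choose k)) *\<^sub>R u ^ k"
      by (simp add: beta_conv)
  qed
  also have "(\<Sum>k. ((-1)^k * real (1 choose k)) *\<^sub>R u ^ k) = p"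
  proof -
    have "(\<lambda>k. ((-1)^k * real (1 choose k)) *\<^sub>R u ^ k) sums
          (\<Sum>k\<in>{0,1}. ((-1)^k * real (1 choose k)) *\<^sub>R u ^ k)"
    proof (rule sums_finite)
      fix k :: nat assume "k \<notin> {0,1}"
      then have "1 < k" by auto
      then have "(1 choose k) = 0" by simp
      then show "((-1)^k * real (1 choose k)) *\<^sub>R u ^ k = 0" by simp
    qed simp
    then show ?thesis by (simp add: sums_iff u_def)
  qed
  finally have rr: "r * r = p" .
  have "(\<Sum>n. f (Suc n)) = r - f 0" unfolding r_def by (rule suminf_split_head[OF sf])
  then have "1 - r = - (\<Sum>n. f (Suc n))" by (simp add: f_def)
  then have "norm (1 - r) = norm (\<Sum>n. f (Suc n))" by simp
  also have "\<dots> \<le> (\<Sum>n. \<bar>beta (Suc n)\<bar>)"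
    by (rule norm_suminf_le[OF _ summable_abs_beta_Suc]) (rule nf)
  also have "\<dots> \<le> 1" by (rule suminf_abs_beta_Suc)
  finally have n1r: "norm (1 - r) \<le> 1" .
  have comm: "z * r = r * z" if zp: "z * p = p * z" for z
  proof -
    have zu: "z * u = u * z" using zp by (simp add: u_def algebra_simps)
    have "z * r = (\<Sum>k. z * f k)"
      unfolding r_def by (rule bounded_linear.suminf[OF bounded_linear_mult_right sf])
    also have "(\<lambda>k. z * f k) = (\<lambda>k. f k * z)"
      by (rule ext) (simp add: f_def power_commute_gen[OF zu])
    also have "(\<Sum>k. f k * z) = r * z"
      unfolding r_def by (rule bounded_linear.suminf[OF bounded_linear_mult_left sf, symmetric])
    finally show ?thesis .
  qed
  show ?thesis using sar rr n1r comm by blast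
qed



definition posQ :: "'a::unital_cstar_algebra \<Rightarrow> bool" where
  "posQ a \<longleftrightarrow> cstar a = a \<and> (\<exists>t\<ge>0. norm (t *\<^sub>R 1 - a) \<le> t)"

lemma posQ_zero: "posQ (0::'a::unital_cstar_algebra)"
  unfolding posQ_def by (rule conjI, simp, rule exI[of _ 0], simp)

lemma posQ_add:
  fixes a b :: "'a::unital_cstar_algebra"
  assumes "posQ a" "posQ b" shows "posQ (a + b)"
proof -
  obtain t1 where t1: "t1 \<ge> 0" "norm (t1 *\<^sub>R 1 - a) \<le> t1" using assms(1) unfolding posQ_def by blast
  obtain t2 where t2: "t2 \<ge> 0" "norm (t2 *\<^sub>R 1 - b) \<le> t2" using assms(2) unfolding posQ_def by blast
  have "(t1 + t2) *\<^sub>R 1 - (a + b) = (t1 *\<^sub>R 1 - a) + (t2 *\<^sub>R 1 - b)"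
    by (simp add: scaleR_add_left algebra_simps)
  then have "norm ((t1 + t2) *\<^sub>R 1 - (a + b)) \<le> norm (t1 *\<^sub>R 1 - a) + norm (t2 *\<^sub>R 1 - b)"
    by (simp only: norm_triangle_ineq)
  then have "norm ((t1 + t2) *\<^sub>R 1 - (a + b)) \<le> t1 + t2" using t1 t2 by linarith
  moreover have "cstar (a + b) = a + b" using assms by (simp add: posQ_def cstar_add)
  ultimately show ?thesis unfolding posQ_def using t1 t2
    by (intro conjI exI[of _ "t1 + t2"]) auto
qed

lemma posQ_scale:
  fixes a :: "'a::unital_cstar_algebra"
  assumes "posQ a" "c \<ge> 0" shows "posQ (c *\<^sub>R a)"
proof -
  obtain t where t: "t \<ge> 0" "norm (t *\<^sub>R 1 - a) \<le> t" using assms(1) unfolding posQ_def by blast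
  have "(c * t) *\<^sub>R 1 - c *\<^sub>R a = c *\<^sub>R (t *\<^sub>R 1 - a)" by (simp add: algebra_simps)
  then have "norm ((c * t) *\<^sub>R 1 - c *\<^sub>R a) = c * norm (t *\<^sub>R 1 - a)" using assms(2) by simp
  also have "\<dots> \<le> c * t" using t assms(2) by (simp add: mult_left_mono)
  finally show ?thesis using assms t unfolding posQ_def
    by (intro conjI exI[of _ "c * t"]) (auto simp: cstar_scaleR)
qed

lemma posQ_sqrt:
  fixes a :: "'a::unital_cstar_algebra"
  assumes "posQ a"
  shows "\<exists>r. cstar r = r \<and> r * r = a \<and> posQ r \<and> (\<forall>z. z * a = a * z \<longrightarrow> z * r = r * z)"
proof -
  obtain t where t: "t \<ge> 0" "norm (t *\<^sub>R 1 - a) \<le> t" and sa: "cstar a = a"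
    using assms unfolding posQ_def by blast
  show ?thesis
  proof (cases "t = 0")
    case True
    then have "a = 0" using t by simp
    then show ?thesis using posQ_zero by (intro exI[of _ 0]) auto
  next
    case False
    then have tp: "t > 0" using t by simp
    define p where "p = (1/t) *\<^sub>R a"
    have sap: "cstar p = p" using sa by (simp add: p_def cstar_scaleR)
    have "(1/t) *\<^sub>R (t *\<^sub>R 1 - a) = (1/t) *\<^sub>R (t *\<^sub>R 1) - (1/t) *\<^sub>R a"
      by (rule scaleR_diff_right)
    also have "(1/t) *\<^sub>R (t *\<^sub>R (1::'a)) = 1" using tp by simp
    finally have "1 - p = (1/t) *\<^sub>R (t *\<^sub>R 1 - a)" by (simp add: p_def)
    then have "norm (1 - p) = (1/t) * norm (t *\<^sub>R 1 - a)" using tp by simp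
    also have "\<dots> \<le> (1/t) * t" using t tp by (intro mult_left_mono) auto
    finally have np: "norm (1 - p) \<le> 1" using tp by simp
    obtain r0 where r0: "cstar r0 = r0" "r0 * r0 = p" "norm (1 - r0) \<le> 1"
      "\<forall>z. z * p = p * z \<longrightarrow> z * r0 = r0 * z"
      using cstar_sqrt_unit[OF sap np] by blast
    define r where "r = sqrt t *\<^sub>R r0"
    have "cstar r = r" using r0(1) by (simp add: r_def cstar_scaleR)
    moreover have "r * r = a"
    proof -
      have "r * r = (sqrt t * sqrt t) *\<^sub>R (r0 * r0)"
        by (simp only: r_def mult_scaleR_left mult_scaleR_right scaleR_scaleR)
      also have "sqrt t * sqrt t = t" using tp by simp
      also have "r0 * r0 = (1/t) *\<^sub>R a" using r0(2) by (simp only: p_def)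
      also have "t *\<^sub>R ((1/t) *\<^sub>R a) = a" using tp by simp
      finally show ?thesis .
    qed
    moreover have "posQ r"
    proof -
      have "sqrt t *\<^sub>R 1 - r = sqrt t *\<^sub>R (1 - r0)" by (simp add: r_def scaleR_diff_right)
      then have "norm (sqrt t *\<^sub>R 1 - r) \<le> sqrt t"
        using r0(3) tp by (simp add: mult_left_le)
      then show ?thesis unfolding posQ_def using \<open>cstar r = r\<close> tp
        by (intro conjI exI[of _ "sqrt t"]) auto
    qed
    moreover have "z * r = r * z" if "z * a = a * z" for z
    proof -
      have "z * p = p * z" using that by (simp add: p_def)
      then have "z * r0 = r0 * z" using r0(4) by blast
      then show ?thesis by (simp add: r_def)
    qed
    ultimately show ?thesis by blast
  qed
qed

lemma scaleC_ii: "scaleC \<i> (scaleC \<i> (b::'a::unital_cstar_algebra)) = - b"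
  using scaleC_scaleC[of \<i> \<i> b] scaleC_minus_left[of 1 b] by simp

lemma cstar_scaleC_ii: "cstar (scaleC \<i> (b::'a::unital_cstar_algebra)) = - scaleC \<i> (cstar b)"
  using cstar_scaleC[of \<i> b] scaleC_minus_left[of \<i> "cstar b"] by simp

lemma norm_scaleC_ii: "norm (scaleC \<i> (b::'a::unital_cstar_algebra)) = norm b"
  using norm_scaleC[of \<i> b] by simp

lemma sq_unit_aux:
  fixes h :: "'a::unital_cstar_algebra"
  assumes sa: "cstar h = h" and nh: "norm h \<le> 1"
  shows "norm (1 - h * h) \<le> 1"
proof -
  define p where "p = 1 - h * h"
  have sap: "cstar p = p" using sa by (simp add: p_def cstar_diff cstar_mult)
  have "norm (1 - p) = (norm h)\<^sup>2" using sa_norm_sq[OF sa] by (simp add: p_def)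
  also have "\<dots> \<le> 1" using nh by (simp add: power_le_one)
  finally have np: "norm (1 - p) \<le> 1" .
  obtain b where b: "cstar b = b" "b * b = p" "\<forall>z. z * p = p * z \<longrightarrow> z * b = b * z"
    using cstar_sqrt_unit[OF sap np] by blast
  have "h * p = p * h" by (simp add: p_def algebra_simps mult.assoc)
  then have hb: "h * b = b * h" using b(3) by blast
  define ib where "ib = scaleC \<i> b"
  define u where "u = h + ib"
  have cu: "cstar u = h - ib" using sa b(1) by (simp add: u_def ib_def cstar_add cstar_scaleC_ii)
  have "cstar u * u = h * h + (h * ib - ib * h) - ib * ib"
    unfolding cu by (simp add: u_def algebra_simps)
  also have "h * ib - ib * h = 0"
    by (simp add: ib_def scaleC_mult_left scaleC_mult_right hb)
  also have "ib * ib = - (b * b)"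
    by (simp add: ib_def scaleC_mult_left scaleC_mult_right scaleC_ii)
  finally have "cstar u * u = 1" using b(2) by (simp add: p_def)
  then have "(norm u)\<^sup>2 = norm (1::'a)" using cstar_identity[of u] by simp
  then have "(norm u)\<^sup>2 \<le> 1" using norm_one_le[where 'a='a] by linarith
  then have nu: "norm u \<le> 1" by (simp add: power_le_one_iff)
  have "u - cstar u = ib + ib" unfolding cu by (simp add: u_def)
  then have "norm (ib + ib) \<le> 2" using norm_triangle_ineq4[of u "cstar u"] nu by simp
  moreover have "ib + ib = 2 *\<^sub>R ib" by (simp add: scaleR_2)
  ultimately have "norm b \<le> 1" by (simp add: ib_def norm_scaleC_ii)
  then have "norm (b * b) \<le> 1" using sa_norm_sq[OF b(1)] by (simp add: power_le_one)
  then show ?thesis using b(2) by (simp add: p_def)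
qed

lemma sq_posQ:
  fixes h :: "'a::unital_cstar_algebra"
  assumes sa: "cstar h = h" shows "posQ (h * h)"
proof (cases "h = 0")
  case True then show ?thesis by (simp add: posQ_zero)
next
  case False
  define m where "m = norm h"
  have mp: "m > 0" using False by (simp add: m_def)
  define h' where "h' = (1/m) *\<^sub>R h"
  have sa': "cstar h' = h'" using sa by (simp add: h'_def cstar_scaleR)
  have "norm h' = 1" using mp by (simp add: h'_def m_def)
  then have n1: "norm (1 - h' * h') \<le> 1" using sq_unit_aux[OF sa'] by simp
  have hh: "h * h = (m * m) *\<^sub>R (h' * h')" using mp by (simp add: h'_def)
  have "(m * m) *\<^sub>R 1 - h * h = (m * m) *\<^sub>R (1 - h' * h')" by (simp add: hh algebra_simps)
  then have "norm ((m * m) *\<^sub>R 1 - h * h) \<le> m * m"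
    using n1 mp by (simp add: mult_left_le)
  moreover have "cstar (h * h) = h * h" using sa by (simp add: cstar_mult)
  ultimately show ?thesis unfolding posQ_def using mp
    by (intro conjI exI[of _ "m * m"]) auto
qed



lemma posQ_antisym:
  fixes b :: "'a::unital_cstar_algebra"
  assumes pb: "posQ b" and nb: "posQ (- b)" shows "b = 0"
proof -
  obtain s where s: "cstar s = s" "s * s = b" "\<forall>z. z * b = b * z \<longrightarrow> z * s = s * z"
    using posQ_sqrt[OF pb] by blast
  obtain r where r: "cstar r = r" "r * r = - b" "\<forall>z. z * (- b) = (- b) * z \<longrightarrow> z * r = r * z"
    using posQ_sqrt[OF nb] by blast
  have "s * b = b * s" using s(2)[symmetric] by (simp add: mult.assoc)
  then have "s * (- b) = (- b) * s" by simp
  then have sr: "s * r = r * s" using r(3) by blast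
  define js where "js = scaleC \<i> s"
  define z where "z = r + js"
  have cz: "cstar z = r - js" using r(1) s(1) by (simp add: z_def js_def cstar_add cstar_scaleC_ii)
  have "cstar z * z = r * r + (r * js - js * r) - js * js"
    unfolding cz by (simp add: z_def algebra_simps)
  also have "r * js - js * r = 0"
    by (simp add: js_def scaleC_mult_left scaleC_mult_right sr)
  also have "js * js = - (s * s)"
    by (simp add: js_def scaleC_mult_left scaleC_mult_right scaleC_ii)
  finally have "cstar z * z = 0" using r(2) s(2) by simp
  then have "norm z = 0" using cstar_identity[of z] by simp
  then have "z = 0" by simp
  then have "r = - js" by (simp add: z_def eq_neg_iff_add_eq_0)
  then have "cstar r = js" by (simp add: cstar_minus js_def cstar_scaleC_ii s(1))
  then have "js = - js" using r(1) \<open>r = - js\<close> by simp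
  then have "js + js = 0" by (metis add.right_inverse)
  then have "norm (js + js) = 0" by simp
  moreover have "js + js = 2 *\<^sub>R js" by (simp add: scaleR_2)
  ultimately have "2 * norm js = 0" by simp
  then have "norm js = 0" by simp
  then have "norm s = 0" by (metis js_def norm_scaleC_ii)
  then show ?thesis using s(2) by simp
qed

lemma pow2_growth_contra:
  fixes G t C :: real
  assumes tp: "t > 0" and C: "C \<ge> 0"
    and bound: "\<And>k. (G / t) ^ (2 ^ k) \<le> 1 + real (2 ^ k) * C"
  shows "G \<le> t"
proof (rule ccontr)
  assume "\<not> G \<le> t"
  then have q1: "G / t > 1" using tp by simp
  define q where "q = G / t"
  define d where "d = q - 1"
  have dp: "d > 0" using q1 by (simp add: d_def q_def)
  obtain n :: nat where n: "2 * C / d\<^sup>2 < real n" using reals_Archimedean2 by blast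
  have "real n < real (2 ^ n)" by (simp add: less_exp)
  define N :: nat where "N = 2 ^ n"
  have "2 * C / d\<^sup>2 < real N" using n \<open>real n < real (2 ^ n)\<close> unfolding N_def by linarith
  then have NC: "2 * C < real N * d\<^sup>2"
    using dp by (simp add: divide_less_eq)
  have Npos: "real N > 0" by (simp add: N_def)
  have bern: "1 + real N * d \<le> q ^ N"
    using Bernoulli_inequality[of d N] dp by (simp add: d_def)
  have "(1 + real N * d)\<^sup>2 \<le> (q ^ N)\<^sup>2"
    using bern dp Npos by (intro power_mono) auto
  also have "(q ^ N)\<^sup>2 = q ^ (2 ^ Suc n)" by (simp add: N_def power_mult[symmetric] mult.commute)
  also have "\<dots> \<le> 1 + real (2 ^ Suc n) * C" using bound[of "Suc n"] by (simp add: q_def)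
  also have "real (2 ^ Suc n) = 2 * real N" by (simp add: N_def)
  finally have ineq: "(1 + real N * d)\<^sup>2 \<le> 1 + 2 * real N * C" by simp
  have "(1 + real N * d)\<^sup>2 = 1 + 2 * real N * d + real N * (real N * d\<^sup>2)"
    by (simp add: power2_eq_square algebra_simps)
  moreover have "real N * (2 * C) < real N * (real N * d\<^sup>2)"
    using NC Npos by (intro mult_strict_left_mono) auto
  moreover have "0 < 2 * real N * d" using Npos dp by simp
  ultimately show False using ineq by (simp add: algebra_simps)
qed

lemma growth_lemma:
  fixes y :: "'a::unital_cstar_algebra"
  assumes "posQ (- (cstar y * y))" shows "posQ (- (y * cstar y))"
proof -
  obtain t where t0: "t \<ge> 0" and tb: "norm (t *\<^sub>R 1 - - (cstar y * y)) \<le> t"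
    using assms unfolding posQ_def by blast
  define g' where "g' = t *\<^sub>R 1 + cstar y * y"
  define g where "g = t *\<^sub>R 1 + y * cstar y"
  have ng': "norm g' \<le> t" using tb by (simp add: g'_def)
  have sag: "cstar g = g" by (simp add: g_def cstar_add cstar_scaleR cstar_mult cstar_cstar)
  have gy: "g * y = y * g'" by (simp add: g_def g'_def algebra_simps mult.assoc)
  have gny: "g ^ n * y = y * g' ^ n" for n
  proof (induction n)
    case 0 then show ?case by simp
  next
    case (Suc n)
    have "g ^ Suc n * y = g * (g ^ n * y)" by (simp add: mult.assoc)
    also have "\<dots> = (g * y) * g' ^ n" using Suc by (simp add: mult.assoc)
    also have "\<dots> = y * g' ^ Suc n" by (simp add: gy mult.assoc)
    finally show ?case .
  qed
  define M where "M = (norm y)\<^sup>2"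
  have M0: "M \<ge> 0" by (simp add: M_def)
  have ng'n: "norm (g' ^ n) \<le> t ^ n" for n
    using norm_power_le[of g' n] power_mono[OF ng' norm_ge_zero] by (meson order_trans)
  have step: "norm (g ^ Suc n) \<le> t * norm (g ^ n) + M * t ^ n" for n
  proof -
    have "g ^ Suc n = g ^ n * g" by (rule power_Suc2)
    also have "\<dots> = t *\<^sub>R g ^ n + (g ^ n * y) * cstar y" by (simp add: g_def algebra_simps mult.assoc)
    also have "\<dots> = t *\<^sub>R g ^ n + y * g' ^ n * cstar y" by (simp add: gny)
    finally have e: "g ^ Suc n = t *\<^sub>R g ^ n + y * g' ^ n * cstar y" .
    have "norm (y * g' ^ n * cstar y) \<le> norm (y * g' ^ n) * norm (cstar y)" by (rule norm_mult_ineq)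
    also have "\<dots> \<le> norm y * norm (g' ^ n) * norm (cstar y)"
      by (intro mult_right_mono norm_mult_ineq norm_ge_zero)
    also have "\<dots> \<le> norm y * t ^ n * norm y"
      using ng'n[of n] by (simp add: mult_right_mono mult_left_mono)
    also have "\<dots> = M * t ^ n" by (simp add: M_def power2_eq_square)
    finally have "norm (y * g' ^ n * cstar y) \<le> M * t ^ n" .
    moreover have "norm (t *\<^sub>R g ^ n + y * g' ^ n * cstar y) \<le> norm (t *\<^sub>R g ^ n) + norm (y * g' ^ n * cstar y)"
      by (rule norm_triangle_ineq)
    moreover have "norm (t *\<^sub>R g ^ n) = t * norm (g ^ n)" using t0 by simp
    ultimately show ?thesis unfolding e by linarith
  qed
  have bnd: "norm (g ^ n) \<le> t ^ n + real n * M * t ^ (n - 1)" for n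
  proof (induction n)
    case 0 then show ?case using norm_one_le[where 'a='a] by simp
  next
    case (Suc n)
    have "norm (g ^ Suc n) \<le> t * norm (g ^ n) + M * t ^ n" by (rule step)
    also have "\<dots> \<le> t * (t ^ n + real n * M * t ^ (n - 1)) + M * t ^ n"
      using Suc t0 by (intro add_right_mono mult_left_mono) auto
    also have "real n * M * t ^ (n - 1) * t = real n * M * t ^ n"
      by (cases n) auto
    then have "t * (t ^ n + real n * M * t ^ (n - 1)) + M * t ^ n = t ^ Suc n + real (Suc n) * M * t ^ (Suc n - 1)"
      by (simp add: algebra_simps)
    finally show ?case .
  qed
  have pw: "norm g ^ (2 ^ k) \<le> t ^ (2 ^ k) + real (2 ^ k) * M * t ^ (2 ^ k - 1)" for k
    using bnd[of "2 ^ k"] sa_norm_pow2[OF sag, of k] by simp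
  have "norm g \<le> t"
  proof (cases "t = 0")
    case True
    then have "norm g ^ 2 \<le> 0" using pw[of 1] by simp
    then show ?thesis using True by simp
  next
    case False
    then have tp: "t > 0" using t0 by simp
    show ?thesis
    proof (rule pow2_growth_contra[OF tp, of "M / t"])
      show "0 \<le> M / t" using M0 tp by simp
      fix k :: nat
      define N :: nat where "N = 2 ^ k"
      have N1: "N \<ge> 1" by (simp add: N_def)
      obtain m where Nm: "N = Suc m" using N1 by (cases N) auto
      have tN: "t ^ N = t ^ (N - 1) * t" by (simp add: Nm power_Suc2)
      have "(norm g / t) ^ N = norm g ^ N / t ^ N" by (simp add: power_divide)
      also have "\<dots> \<le> (t ^ N + real N * M * t ^ (N - 1)) / t ^ N"
        using pw[of k] tp by (intro divide_right_mono) (auto simp: N_def)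
      also have "\<dots> = 1 + real N * (M / t)"
      proof -
        have A: "t ^ (N - 1) > 0" using tp by simp
        show ?thesis unfolding tN using A tp by (simp add: field_simps)
      qed
      finally show "(norm g / t) ^ (2 ^ k) \<le> 1 + real (2 ^ k) * (M / t)" by (simp add: N_def)
    qed
  qed
  moreover have "cstar (- (y * cstar y)) = - (y * cstar y)" by (simp add: cstar_minus cstar_mult cstar_cstar)
  moreover have "t *\<^sub>R 1 - - (y * cstar y) = g" by (simp add: g_def)
  ultimately show ?thesis unfolding posQ_def using t0 by auto
qed



lemma posQ_cstar_mult:
  fixes x :: "'a::unital_cstar_algebra"
  shows "posQ (cstar x * x)"
proof -
  define a where "a = cstar x * x"
  have saa: "cstar a = a" by (simp add: a_def cstar_mult cstar_cstar)
  have "posQ (a * a)" using sq_posQ[OF saa] .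
  then obtain c where c: "cstar c = c" "c * c = a * a" "posQ c"
    "\<forall>z. z * (a * a) = (a * a) * z \<longrightarrow> z * c = c * z"
    using posQ_sqrt by blast
  have "a * (a * a) = (a * a) * a" by (simp add: mult.assoc)
  then have ac: "a * c = c * a" using c(4) by blast
  define d where "d = c - a"
  have sad: "cstar d = d" using c(1) saa by (simp add: d_def cstar_diff)
  have dc: "d * c = c * d" using ac by (simp add: d_def algebra_simps)
  obtain w where w: "cstar w = w" "w * w = c" "posQ w" "\<forall>z. z * c = c * z \<longrightarrow> z * w = w * z"
    using posQ_sqrt[OF c(3)] by blast
  have wd: "d * w = w * d" using dc w(4) by blast
  have "d * a = d * c - d * d" by (simp add: d_def algebra_simps)
  have dca: "d * (c + a) = 0"
  proof -
    have "d * (c + a) = c * c + (c * a - a * c) - a * a" by (simp add: d_def algebra_simps)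
    then show ?thesis using ac c(2) by simp
  qed
  have da: "d * a = - (d * c)"
    using dca by (simp add: distrib_left eq_neg_iff_add_eq_0 add.commute)
  define y where "y = x * d"
  have yy: "cstar y * y = d * a * d"
    by (simp add: y_def a_def cstar_mult sad mult.assoc)
  have dad: "d * a * d = - (c * d * d)"
    by (simp add: da dc mult.assoc[symmetric])
  define v where "v = w * d"
  have sav: "cstar v = v" by (simp add: v_def cstar_mult w(1) sad wd)
  have vv: "v * v = c * d * d"
  proof -
    have "v * v = w * (d * w) * d" by (simp add: v_def mult.assoc)
    also have "\<dots> = (w * w) * d * d" by (simp add: wd mult.assoc)
    finally show ?thesis by (simp add: w(2))
  qed
  have "- (cstar y * y) = v * v" by (simp add: yy dad vv)
  then have "posQ (- (cstar y * y))" using sq_posQ[OF sav] by simp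
  then have negQ: "posQ (- (y * cstar y))" by (rule growth_lemma)
  define g1 where "g1 = y + cstar y"
  define g2 where "g2 = scaleC \<i> (cstar y - y)"
  have sg1: "cstar g1 = g1" by (simp add: g1_def cstar_add cstar_cstar add.commute)
  have sg2: "cstar g2 = g2"
    by (simp add: g2_def cstar_scaleC_ii cstar_diff cstar_cstar scaleC_diff_right)
  have g2g2: "g2 * g2 = - ((cstar y - y) * (cstar y - y))"
    by (simp add: g2_def scaleC_mult_left scaleC_mult_right scaleC_ii)
  have "g1 * g1 + g2 * g2 = 2 *\<^sub>R (y * cstar y + cstar y * y)"
    unfolding g2g2 by (simp add: g1_def algebra_simps scaleR_2)
  then have "y * cstar y = (1/2) *\<^sub>R (g1 * g1 + g2 * g2) + - (cstar y * y)"
    by simp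
  moreover have "posQ ((1/2) *\<^sub>R (g1 * g1 + g2 * g2))"
    by (intro posQ_scale posQ_add sq_posQ sg1 sg2) simp
  ultimately have "posQ (y * cstar y)"
    using posQ_add \<open>posQ (- (cstar y * y))\<close> by metis
  then have "y * cstar y = 0" using negQ by (rule posQ_antisym)
  then have "norm (cstar y) = 0"
    using cstar_identity[of "cstar y"] by (simp add: cstar_cstar)
  then have "y = 0" by (metis cstar_cstar cstar_zero norm_eq_zero)
  then have cdd: "c * d * d = 0" using yy dad by simp
  have "d * d * d = d * d * c - d * (d * a)" by (simp add: d_def algebra_simps)
  also have "d * d * c = c * d * d" by (metis dc mult.assoc)
  also have "d * (d * a) = - (c * d * d)" by (simp add: da dc mult.assoc[symmetric])
  finally have ddd: "d * d * d = 0" using cdd by simp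
  have sadd: "cstar (d * d) = d * d" by (simp add: cstar_mult sad)
  have "(d * d) * (d * d) = 0" using ddd by (simp add: mult.assoc[symmetric])
  then have "norm (d * d) = 0" using sa_norm_sq[OF sadd] by simp
  then have "norm d = 0" using sa_norm_sq[OF sad] by simp
  then have "a = c" by (simp add: d_def)
  then show ?thesis using c(3) by (simp add: a_def)
qed

lemma positive_iff_posQ: "positive (a::'a::unital_cstar_algebra) \<longleftrightarrow> posQ a"
proof
  assume "positive a"
  then obtain x where "a = cstar x * x" unfolding positive_def by blast
  then show "posQ a" using posQ_cstar_mult by simp
next
  assume "posQ a"
  then obtain r where "cstar r = r" "r * r = a" using posQ_sqrt by blast
  then show "positive a" unfolding positive_def by (metis)
qed

lemma positive_add: "positive a \<Longrightarrow> positive b \<Longrightarrow> positive (a + (b::'a::unital_cstar_algebra))"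
  by (simp add: positive_iff_posQ posQ_add)



lemma bcm_sandwich: "bounded_clinear_map (\<lambda>v. cstar A * v * (B::'a::unital_cstar_algebra))"
  unfolding bounded_clinear_map_def
proof (intro conjI allI exI)
  fix x y show "cstar A * (x + y) * B = cstar A * x * B + cstar A * y * B"
    by (simp add: algebra_simps)
next
  fix \<alpha> x show "cstar A * scaleC \<alpha> x * B = scaleC \<alpha> (cstar A * x * B)"
    by (simp add: scaleC_mult_left scaleC_mult_right)
next
  fix x show "norm (cstar A * x * B) \<le> (norm A * norm B) * norm x"
  proof -
    have "norm (cstar A * x * B) \<le> norm (cstar A * x) * norm B" by (rule norm_mult_ineq)
    also have "\<dots> \<le> norm A * norm x * norm B"
      using norm_mult_ineq[of "cstar A" x] by (simp add: mult_right_mono)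
    finally show ?thesis by (simp add: mult_ac)
  qed
qed

lemma bcm_zero: "bounded_clinear_map (\<lambda>v. 0::'a::unital_cstar_algebra)"
  unfolding bounded_clinear_map_def by (auto intro: exI[of _ 0])

lemma bcm_add:
  assumes "bounded_clinear_map f" "bounded_clinear_map (g::'a::unital_cstar_algebra \<Rightarrow> 'a)"
  shows "bounded_clinear_map (\<lambda>v. f v + g v)"
proof -
  obtain K1 where K1: "\<forall>x. norm (f x) \<le> K1 * norm x" using assms(1) unfolding bounded_clinear_map_def by blast
  obtain K2 where K2: "\<forall>x. norm (g x) \<le> K2 * norm x" using assms(2) unfolding bounded_clinear_map_def by blast
  have "norm (f x + g x) \<le> (K1 + K2) * norm x" for x
    using norm_triangle_ineq[of "f x" "g x"] K1 K2 by (simp add: distrib_right) (smt (verit))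
  then have bd: "\<forall>x. norm (f x + g x) \<le> (K1 + K2) * norm x" by blast
  have ad: "\<forall>x y. f (x + y) + g (x + y) = (f x + g x) + (f y + g y)"
    using assms unfolding bounded_clinear_map_def by (simp add: algebra_simps)
  have sc: "\<forall>\<alpha> x. f (scaleC \<alpha> x) + g (scaleC \<alpha> x) = scaleC \<alpha> (f x + g x)"
    using assms unfolding bounded_clinear_map_def by (simp add: scaleC_add_right)
  show ?thesis unfolding bounded_clinear_map_def using bd ad sc by blast
qed

lemma positive_sum_cstar: "positive (cstar Y * (Y::'a::unital_cstar_algebra))"
  unfolding positive_def by blast

lemma CPD_elem: "CPD_kernel (elem_kernel c t :: 's \<Rightarrow> 's \<Rightarrow> 'a::unital_cstar_algebra \<Rightarrow> 'a)"
  unfolding CPD_kernel_def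
proof (intro conjI allI)
  fix s s' show "bounded_clinear_map (elem_kernel c t s s')"
    unfolding elem_kernel_def[abs_def] by (rule bcm_sandwich)
next
  fix n :: nat and s :: "nat \<Rightarrow> 's" and a b :: "nat \<Rightarrow> 'a"
  define Y where "Y = (\<Sum>j<n. a j * c (s j) t * b j)"
  have "cstar Y * Y = (\<Sum>i<n. cstar (b i) * cstar (c (s i) t) * cstar (a i)) * (\<Sum>j<n. a j * c (s j) t * b j)"
    by (simp add: Y_def cstar_sum cstar_mult mult.assoc)
  also have "\<dots> = (\<Sum>i<n. \<Sum>j<n. cstar (b i) * cstar (c (s i) t) * cstar (a i) * (a j * c (s j) t * b j))"
    by (rule sum_product)
  also have "\<dots> = (\<Sum>i<n. \<Sum>j<n. cstar (b i) * elem_kernel c t (s i) (s j) (cstar (a i) * a j) * b j)"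
    by (simp add: elem_kernel_def mult.assoc)
  finally show "positive (\<Sum>i<n. \<Sum>j<n. cstar (b i) * elem_kernel c t (s i) (s j) (cstar (a i) * a j) * b j)"
    using positive_sum_cstar[of Y] by simp
qed

lemma CPD_add:
  assumes "CPD_kernel K" "CPD_kernel (L :: 's \<Rightarrow> 's \<Rightarrow> 'a::unital_cstar_algebra \<Rightarrow> 'a)"
  shows "CPD_kernel (\<lambda>x y v. K x y v + L x y v)"
  unfolding CPD_kernel_def
proof (intro conjI allI)
  fix s s' show "bounded_clinear_map (\<lambda>v. K s s' v + L s s' v)"
    using assms unfolding CPD_kernel_def by (intro bcm_add) auto
next
  fix n :: nat and s :: "nat \<Rightarrow> 's" and a b :: "nat \<Rightarrow> 'a"
  have "(\<Sum>i<n. \<Sum>j<n. cstar (b i) * (K (s i) (s j) (cstar (a i) * a j) + L (s i) (s j) (cstar (a i) * a j)) * b j)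
    = (\<Sum>i<n. \<Sum>j<n. cstar (b i) * K (s i) (s j) (cstar (a i) * a j) * b j)
      + (\<Sum>i<n. \<Sum>j<n. cstar (b i) * L (s i) (s j) (cstar (a i) * a j) * b j)"
    by (simp add: distrib_left distrib_right sum.distrib)
  moreover have "positive (\<Sum>i<n. \<Sum>j<n. cstar (b i) * K (s i) (s j) (cstar (a i) * a j) * b j)"
    using assms(1) unfolding CPD_kernel_def by blast
  moreover have "positive (\<Sum>i<n. \<Sum>j<n. cstar (b i) * L (s i) (s j) (cstar (a i) * a j) * b j)"
    using assms(2) unfolding CPD_kernel_def by blast
  ultimately show "positive (\<Sum>i<n. \<Sum>j<n. cstar (b i) * (K (s i) (s j) (cstar (a i) * a j) + L (s i) (s j) (cstar (a i) * a j)) * b j)"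
    by (simp only: positive_add)
qed

definition blk :: "('s1 \<Rightarrow> 's1 \<Rightarrow> 'a::unital_cstar_algebra \<Rightarrow> 'a) \<Rightarrow> ('s2 \<Rightarrow> 's2 \<Rightarrow> 'a \<Rightarrow> 'a) \<Rightarrow>
    's1 + 's2 \<Rightarrow> 's1 + 's2 \<Rightarrow> 'a \<Rightarrow> 'a" where
  "blk K1 K2 x y v = (case (x, y) of (Inl s, Inl s') \<Rightarrow> K1 s s' v | (Inr s, Inr s') \<Rightarrow> K2 s s' v | _ \<Rightarrow> 0)"

lemma CPD_blk:
  fixes K1 :: "'s1 \<Rightarrow> 's1 \<Rightarrow> 'a::unital_cstar_algebra \<Rightarrow> 'a" and K2 :: "'s2 \<Rightarrow> 's2 \<Rightarrow> 'a \<Rightarrow> 'a"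
  assumes K1: "CPD_kernel K1" and K2: "CPD_kernel K2"
  shows "CPD_kernel (blk K1 K2)"
  unfolding CPD_kernel_def
proof (intro conjI allI)
  fix x y :: "'s1 + 's2"
  show "bounded_clinear_map (blk K1 K2 x y)"
    using K1 K2 bcm_zero unfolding CPD_kernel_def blk_def[abs_def]
    by (cases x; cases y) auto
next
  fix n :: nat and s :: "nat \<Rightarrow> 's1 + 's2" and a b :: "nat \<Rightarrow> 'a"
  define b1 where "b1 i = (case s i of Inl _ \<Rightarrow> b i | Inr _ \<Rightarrow> 0)" for i
  define b2 where "b2 i = (case s i of Inr _ \<Rightarrow> b i | Inl _ \<Rightarrow> 0)" for i
  define p1 where "p1 i = (case s i of Inl z \<Rightarrow> z | Inr _ \<Rightarrow> undefined)" for i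
  define p2 where "p2 i = (case s i of Inr z \<Rightarrow> z | Inl _ \<Rightarrow> undefined)" for i
  have trm: "cstar (b i) * blk K1 K2 (s i) (s j) v * b j =
      cstar (b1 i) * K1 (p1 i) (p1 j) v * b1 j + cstar (b2 i) * K2 (p2 i) (p2 j) v * b2 j" for i j v
    by (cases "s i"; cases "s j") (simp_all add: b1_def b2_def p1_def p2_def blk_def)
  have "(\<Sum>i<n. \<Sum>j<n. cstar (b i) * blk K1 K2 (s i) (s j) (cstar (a i) * a j) * b j)
     = (\<Sum>i<n. \<Sum>j<n. cstar (b1 i) * K1 (p1 i) (p1 j) (cstar (a i) * a j) * b1 j)
      + (\<Sum>i<n. \<Sum>j<n. cstar (b2 i) * K2 (p2 i) (p2 j) (cstar (a i) * a j) * b2 j)"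
    by (simp only: trm sum.distrib)
  moreover have "positive (\<Sum>i<n. \<Sum>j<n. cstar (b1 i) * K1 (p1 i) (p1 j) (cstar (a i) * a j) * b1 j)"
    using K1 unfolding CPD_kernel_def by blast
  moreover have "positive (\<Sum>i<n. \<Sum>j<n. cstar (b2 i) * K2 (p2 i) (p2 j) (cstar (a i) * a j) * b2 j)"
    using K2 unfolding CPD_kernel_def by blast
  ultimately show "positive (\<Sum>i<n. \<Sum>j<n. cstar (b i) * blk K1 K2 (s i) (s j) (cstar (a i) * a j) * b j)"
    by (simp only: positive_add)
qed



lemma norm_sandwich: "norm (cstar A * v * B) \<le> norm A * norm v * norm (B::'a::unital_cstar_algebra)"
proof -
  have "norm (cstar A * v * B) \<le> norm (cstar A * v) * norm B" by (rule norm_mult_ineq)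
  also have "\<dots> \<le> norm A * norm v * norm B"
    using norm_mult_ineq[of "cstar A" v] by (simp add: mult_right_mono)
  finally show ?thesis .
qed

lemma elem_sg_step:
  fixes f g :: "real \<Rightarrow> 'a::unital_cstar_algebra"
  assumes f: "cont_semigroup f" and g: "cont_semigroup g" and t: "t \<ge> 0" and u: "u \<ge> 0"
  shows "cstar (f (t + u)) * v * g (t + u) = cstar (f t) * (cstar (f u) * v * g u) * g t"
proof -
  have "f (t + u) = f u * f t" using f u t unfolding cont_semigroup_def
    by (metis add.commute)
  moreover have "g (t + u) = g u * g t" using g u t unfolding cont_semigroup_def
    by (metis add.commute)
  ultimately show ?thesis by (simp add: cstar_mult mult.assoc)
qed

lemma elem_at0:
  assumes "cont_semigroup f" "cont_semigroup (g::real \<Rightarrow> 'a::unital_cstar_algebra)"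
  shows "cstar (f 0) * v * g 0 = v"
  using assms unfolding cont_semigroup_def by simp

lemma CPD_semigroup_elem:
  assumes c: "\<forall>s. cont_semigroup (c s :: real \<Rightarrow> 'a::unital_cstar_algebra)"
  shows "CPD_semigroup (elem_kernel c)"
  unfolding CPD_semigroup_def
proof (intro conjI allI impI)
  fix t :: real show "CPD_kernel (elem_kernel c t)" by (rule CPD_elem)
next
  fix s s'
  have "cont_semigroup (c s)" "cont_semigroup (c s')" using c by auto
  then show "elem_kernel c 0 s s' = id"
    by (intro ext) (simp add: elem_kernel_def elem_at0)
next
  fix s s' and t u :: real assume tu: "t \<ge> 0" "u \<ge> 0"
  have "cont_semigroup (c s)" "cont_semigroup (c s')" using c by auto
  then show "elem_kernel c (t + u) s s' = elem_kernel c t s s' \<circ> elem_kernel c u s s'"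
    by (intro ext) (simp add: elem_kernel_def elem_sg_step[OF _ _ tu])
qed

lemma E1: "boxplus T1 T2 c1 c2 t = (\<lambda>x y v. elem_kernel (case_sum c1 c2) t x y v +
   blk (\<lambda>s s' v. T1 t s s' v - elem_kernel c1 t s s' v) (\<lambda>s s' v. T2 t s s' v - elem_kernel c2 t s s' v) x y v)"
proof (intro ext)
  fix x y v
  show "boxplus T1 T2 c1 c2 t x y v = elem_kernel (case_sum c1 c2) t x y v +
   blk (\<lambda>s s' v. T1 t s s' v - elem_kernel c1 t s s' v) (\<lambda>s s' v. T2 t s s' v - elem_kernel c2 t s s' v) x y v"
    by (cases x; cases y) (simp_all add: boxplus_def blk_def elem_kernel_def)
qed

lemma E2: "(\<lambda>x y v. boxplus T1 T2 c1 c2 t x y v - boxplus (elem_kernel c1) (elem_kernel c2) c1 c2 t x y v) =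
   blk (\<lambda>s s' v. T1 t s s' v - elem_kernel c1 t s s' v) (\<lambda>s s' v. T2 t s s' v - elem_kernel c2 t s s' v)"
proof (intro ext)
  fix x y v
  show "boxplus T1 T2 c1 c2 t x y v - boxplus (elem_kernel c1) (elem_kernel c2) c1 c2 t x y v =
   blk (\<lambda>s s' v. T1 t s s' v - elem_kernel c1 t s s' v) (\<lambda>s s' v. T2 t s s' v - elem_kernel c2 t s s' v) x y v"
    by (cases x; cases y) (simp_all add: boxplus_def blk_def elem_kernel_def)
qed

lemma E3: "boxplus (elem_kernel c1) (elem_kernel c2) c1 c2 = elem_kernel (case_sum c1 c2)"
proof (intro ext)
  fix t x y v
  show "boxplus (elem_kernel c1) (elem_kernel c2) c1 c2 t x y v = elem_kernel (case_sum c1 c2) t x y v"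
    by (cases x; cases y) (simp_all add: boxplus_def elem_kernel_def)
qed

lemma cont_case_sum:
  assumes "\<forall>s. cont_semigroup (c1 s)" "\<forall>s. cont_semigroup (c2 s)"
  shows "\<forall>x. cont_semigroup (case_sum c1 c2 x)"
  using assms by (auto split: sum.split)

lemma sg_boxplus:
  fixes T1 :: "real \<Rightarrow> 's1 \<Rightarrow> 's1 \<Rightarrow> 'a::unital_cstar_algebra \<Rightarrow> 'a"
    and T2 :: "real \<Rightarrow> 's2 \<Rightarrow> 's2 \<Rightarrow> 'a \<Rightarrow> 'a"
  assumes S1: "CPD_semigroup T1" and S2: "CPD_semigroup T2"
    and D1: "dominates T1 (elem_kernel c1)" and D2: "dominates T2 (elem_kernel c2)"
    and c1: "\<forall>s. cont_semigroup (c1 s)" and c2: "\<forall>s. cont_semigroup (c2 s)"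
  shows "CPD_semigroup (boxplus T1 T2 c1 c2)"
  unfolding CPD_semigroup_def
proof (intro conjI allI impI)
  fix t :: real assume t: "t \<ge> 0"
  have "CPD_kernel (\<lambda>s s' v. T1 t s s' v - elem_kernel c1 t s s' v)" using D1 t unfolding dominates_def by blast
  moreover have "CPD_kernel (\<lambda>s s' v. T2 t s s' v - elem_kernel c2 t s s' v)" using D2 t unfolding dominates_def by blast
  ultimately show "CPD_kernel (boxplus T1 T2 c1 c2 t)"
    unfolding E1 by (intro CPD_add CPD_elem CPD_blk)
next
  fix x y
  have T10: "T1 0 s s' v = v" for s s' v using S1 unfolding CPD_semigroup_def by simp
  have T20: "T2 0 s s' v = v" for s s' v using S2 unfolding CPD_semigroup_def by simp
  show "boxplus T1 T2 c1 c2 0 x y = id"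
  proof (rule ext)
    fix v show "boxplus T1 T2 c1 c2 0 x y v = id v"
      using c1 c2 unfolding cont_semigroup_def by (cases x; cases y) (simp_all add: boxplus_def T10 T20)
  qed
next
  fix x y and t u :: real assume t: "t \<ge> 0" and u: "u \<ge> 0"
  have T1s: "T1 (t + u) s s' v = T1 t s s' (T1 u s s' v)" for s s' v
    using S1 t u unfolding CPD_semigroup_def by simp
  have T2s: "T2 (t + u) s s' v = T2 t s s' (T2 u s s' v)" for s s' v
    using S2 t u unfolding CPD_semigroup_def by simp
  show "boxplus T1 T2 c1 c2 (t + u) x y = boxplus T1 T2 c1 c2 t x y \<circ> boxplus T1 T2 c1 c2 u x y"
  proof (rule ext)
    fix v show "boxplus T1 T2 c1 c2 (t + u) x y v = (boxplus T1 T2 c1 c2 t x y \<circ> boxplus T1 T2 c1 c2 u x y) v"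
      using c1 c2 by (cases x; cases y) (simp_all add: boxplus_def T1s T2s elem_sg_step[OF _ _ t u])
  qed
qed

lemma cont_sandwich:
  fixes f g :: "real \<Rightarrow> 'a::unital_cstar_algebra"
  assumes "cont_semigroup f" "cont_semigroup g"
  shows "continuous_on {0..} (\<lambda>t. cstar (f t) * b * g t)"
proof -
  have cf: "continuous_on {0..} f" and cg: "continuous_on {0..} g"
    using assms unfolding cont_semigroup_def by auto
  have "continuous_on {0..} (\<lambda>t. cstar (f t))"
    by (rule bounded_linear.continuous_on[OF bounded_linear_cstar cf])
  then show ?thesis using cg by (intro continuous_on_mult continuous_on_const)
qed

lemma bl_sandwich: "bounded_linear (\<lambda>v. A * v * (B::'a::unital_cstar_algebra))"
  by (rule bounded_linear_compose[OF bounded_linear_mult_left bounded_linear_mult_right])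

lemma unif_sandwich:
  fixes f g :: "real \<Rightarrow> 'a::unital_cstar_algebra"
  assumes "cont_semigroup f" "cont_semigroup g" and t0: "t0 \<ge> 0"
  shows "((\<lambda>t. onorm (\<lambda>v. cstar (f t) * v * g t - cstar (f t0) * v * g t0)) \<longlongrightarrow> 0) (at t0 within {0..})"
proof -
  have cf: "continuous_on {0..} f" and cg: "continuous_on {0..} g"
    using assms unfolding cont_semigroup_def by auto
  have lf: "(f \<longlongrightarrow> f t0) (at t0 within {0..})" using cf t0 unfolding continuous_on_def by auto
  have lg: "(g \<longlongrightarrow> g t0) (at t0 within {0..})" using cg t0 unfolding continuous_on_def by auto
  define K where "K t = norm (f t - f t0) * norm (g t) + norm (f t0) * norm (g t - g t0)" for t
  have "(K \<longlongrightarrow> 0 * norm (g t0) + norm (f t0) * 0) (at t0 within {0..})"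
    unfolding K_def using lf lg
    by (intro tendsto_add tendsto_mult tendsto_norm tendsto_const tendsto_norm_zero tendsto_diff
          LIM_zero) auto
  then have K0: "(K \<longlongrightarrow> 0) (at t0 within {0..})" by simp
  have bnd: "norm (onorm (\<lambda>v. cstar (f t) * v * g t - cstar (f t0) * v * g t0)) \<le> K t" for t
  proof -
    have bl: "bounded_linear (\<lambda>v. cstar (f t) * v * g t - cstar (f t0) * v * g t0)"
      by (intro bounded_linear_sub bl_sandwich)
    have K0: "K t \<ge> 0" by (simp add: K_def)
    have "norm (cstar (f t) * v * g t - cstar (f t0) * v * g t0) \<le> K t * norm v" for v
    proof -
      have e: "cstar (f t) * v * g t - cstar (f t0) * v * g t0 =
          cstar (f t - f t0) * v * g t + cstar (f t0) * v * (g t - g t0)"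
        by (simp add: cstar_diff algebra_simps)
      have n1: "norm (cstar (f t - f t0) * v * g t) \<le> norm (f t - f t0) * norm v * norm (g t)"
        by (rule norm_sandwich)
      have n2: "norm (cstar (f t0) * v * (g t - g t0)) \<le> norm (f t0) * norm v * norm (g t - g t0)"
        by (rule norm_sandwich)
      have "norm (cstar (f t) * v * g t - cstar (f t0) * v * g t0) \<le>
          norm (cstar (f t - f t0) * v * g t) + norm (cstar (f t0) * v * (g t - g t0))"
        unfolding e by (rule norm_triangle_ineq)
      also have "\<dots> \<le> norm (f t - f t0) * norm v * norm (g t) + norm (f t0) * norm v * norm (g t - g t0)"
        using n1 n2 by (rule add_mono)
      also have "\<dots> = K t * norm v" by (simp add: K_def algebra_simps)
      finally show ?thesis .
    qed
    then have "onorm (\<lambda>v. cstar (f t) * v * g t - cstar (f t0) * v * g t0) \<le> K t"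
      using K0 by (intro onorm_bound) auto
    moreover have "0 \<le> onorm (\<lambda>v. cstar (f t) * v * g t - cstar (f t0) * v * g t0)"
      by (rule onorm_pos_le[OF bl])
    ultimately show ?thesis by simp
  qed
  show ?thesis
    by (rule Lim_null_comparison[OF _ K0]) (intro always_eventually allI bnd)
qed




theorem theorem3p1:
  fixes T1 :: "real \<Rightarrow> 's1 \<Rightarrow> 's1 \<Rightarrow> 'a::unital_cstar_algebra \<Rightarrow> 'a"
    and T2 :: "real \<Rightarrow> 's2 \<Rightarrow> 's2 \<Rightarrow> 'a \<Rightarrow> 'a"
    and c1 :: "'s1 \<Rightarrow> real \<Rightarrow> 'a"
    and c2 :: "'s2 \<Rightarrow> real \<Rightarrow> 'a"
  assumes T1: "spatial T1" and T2: "spatial T2"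
    and c1: "\<forall>s. cont_semigroup (c1 s)" and c2: "\<forall>s. cont_semigroup (c2 s)"
    and unit1: "is_CPD_unit T1 (elem_kernel c1)"
    and unit2: "is_CPD_unit T2 (elem_kernel c2)"
  shows "spatial (boxplus T1 T2 c1 c2)
    \<and> is_CPD_unit (boxplus T1 T2 c1 c2) (boxplus (elem_kernel c1) (elem_kernel c2) c1 c2)
    \<and> (uniformly_continuous_sg (boxplus T1 T2 c1 c2) \<longleftrightarrow>
         uniformly_continuous_sg T1 \<and> uniformly_continuous_sg T2)
    \<and> (strongly_continuous (boxplus T1 T2 c1 c2) \<longleftrightarrow>
         strongly_continuous T1 \<and> strongly_continuous T2)"
proof -
  have S1: "CPD_semigroup T1" using T1 unfolding spatial_def by blast
  have S2: "CPD_semigroup T2" using T2 unfolding spatial_def by blast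
  have D1: "dominates T1 (elem_kernel c1)" using unit1 unfolding is_CPD_unit_def by blast
  have D2: "dominates T2 (elem_kernel c2)" using unit2 unfolding is_CPD_unit_def by blast
  have SG: "CPD_semigroup (boxplus T1 T2 c1 c2)" by (rule sg_boxplus[OF S1 S2 D1 D2 c1 c2])
  have cc: "\<forall>x. cont_semigroup (case_sum c1 c2 x)" by (rule cont_case_sum[OF c1 c2])
  have EL: "elementary (boxplus (elem_kernel c1) (elem_kernel c2) c1 c2)"
    unfolding elementary_def E3
    using CPD_semigroup_elem[OF cc] cc by blast
  have DOM: "dominates (boxplus T1 T2 c1 c2) (boxplus (elem_kernel c1) (elem_kernel c2) c1 c2)"
    unfolding dominates_def
  proof (intro allI impI)
    fix t :: real assume t: "t \<ge> 0"
    have "CPD_kernel (\<lambda>s s' v. T1 t s s' v - elem_kernel c1 t s s' v)" using D1 t unfolding dominates_def by blast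
    moreover have "CPD_kernel (\<lambda>s s' v. T2 t s s' v - elem_kernel c2 t s s' v)" using D2 t unfolding dominates_def by blast
    ultimately show "CPD_kernel (\<lambda>s s' b. boxplus T1 T2 c1 c2 t s s' b - boxplus (elem_kernel c1) (elem_kernel c2) c1 c2 t s s' b)"
      unfolding E2 by (rule CPD_blk)
  qed
  have UNIT: "is_CPD_unit (boxplus T1 T2 c1 c2) (boxplus (elem_kernel c1) (elem_kernel c2) c1 c2)"
    unfolding is_CPD_unit_def using EL DOM by blast
  have SP: "spatial (boxplus T1 T2 c1 c2)" unfolding spatial_def using SG UNIT by blast
  have UC: "uniformly_continuous_sg (boxplus T1 T2 c1 c2) \<longleftrightarrow>
         uniformly_continuous_sg T1 \<and> uniformly_continuous_sg T2"
  proof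
    assume U: "uniformly_continuous_sg (boxplus T1 T2 c1 c2)"
    show "uniformly_continuous_sg T1 \<and> uniformly_continuous_sg T2"
      unfolding uniformly_continuous_sg_def
    proof (intro conjI allI impI)
      fix s s' and t0 :: real assume t0: "t0 \<ge> 0"
      have "((\<lambda>t. onorm (\<lambda>b. boxplus T1 T2 c1 c2 t (Inl s) (Inl s') b - boxplus T1 T2 c1 c2 t0 (Inl s) (Inl s') b)) \<longlongrightarrow> 0) (at t0 within {0..})"
        using U t0 unfolding uniformly_continuous_sg_def by blast
      then show "((\<lambda>t. onorm (\<lambda>b. T1 t s s' b - T1 t0 s s' b)) \<longlongrightarrow> 0) (at t0 within {0..})"
        by (simp add: boxplus_def)
    next
      fix s s' and t0 :: real assume t0: "t0 \<ge> 0"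
      have "((\<lambda>t. onorm (\<lambda>b. boxplus T1 T2 c1 c2 t (Inr s) (Inr s') b - boxplus T1 T2 c1 c2 t0 (Inr s) (Inr s') b)) \<longlongrightarrow> 0) (at t0 within {0..})"
        using U t0 unfolding uniformly_continuous_sg_def by blast
      then show "((\<lambda>t. onorm (\<lambda>b. T2 t s s' b - T2 t0 s s' b)) \<longlongrightarrow> 0) (at t0 within {0..})"
        by (simp add: boxplus_def)
    qed
  next
    assume U: "uniformly_continuous_sg T1 \<and> uniformly_continuous_sg T2"
    show "uniformly_continuous_sg (boxplus T1 T2 c1 c2)"
      unfolding uniformly_continuous_sg_def
    proof (intro allI impI)
      fix x y and t0 :: real assume t0: "t0 \<ge> 0"
      show "((\<lambda>t. onorm (\<lambda>b. boxplus T1 T2 c1 c2 t x y b - boxplus T1 T2 c1 c2 t0 x y b)) \<longlongrightarrow> 0) (at t0 within {0..})"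
      proof (cases x; cases y)
        fix s s' assume xy: "x = Inl s" "y = Inl s'"
        have "((\<lambda>t. onorm (\<lambda>b. T1 t s s' b - T1 t0 s s' b)) \<longlongrightarrow> 0) (at t0 within {0..})"
          using U t0 unfolding uniformly_continuous_sg_def by blast
        then show ?thesis by (simp add: xy boxplus_def)
      next
        fix s s' assume xy: "x = Inl s" "y = Inr s'"
        have "((\<lambda>t. onorm (\<lambda>v. cstar (c1 s t) * v * c2 s' t - cstar (c1 s t0) * v * c2 s' t0)) \<longlongrightarrow> 0) (at t0 within {0..})"
          using c1 c2 t0 by (intro unif_sandwich) auto
        then show ?thesis by (simp add: xy boxplus_def)
      next
        fix s s' assume xy: "x = Inr s" "y = Inl s'"
        have "((\<lambda>t. onorm (\<lambda>v. cstar (c2 s t) * v * c1 s' t - cstar (c2 s t0) * v * c1 s' t0)) \<longlongrightarrow> 0) (at t0 within {0..})"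
          using c1 c2 t0 by (intro unif_sandwich) auto
        then show ?thesis by (simp add: xy boxplus_def)
      next
        fix s s' assume xy: "x = Inr s" "y = Inr s'"
        have "((\<lambda>t. onorm (\<lambda>b. T2 t s s' b - T2 t0 s s' b)) \<longlongrightarrow> 0) (at t0 within {0..})"
          using U t0 unfolding uniformly_continuous_sg_def by blast
        then show ?thesis by (simp add: xy boxplus_def)
      qed
    qed
  qed
  have SC: "strongly_continuous (boxplus T1 T2 c1 c2) \<longleftrightarrow>
         strongly_continuous T1 \<and> strongly_continuous T2"
  proof
    assume U: "strongly_continuous (boxplus T1 T2 c1 c2)"
    show "strongly_continuous T1 \<and> strongly_continuous T2"
      unfolding strongly_continuous_def
    proof (intro conjI allI)
      fix s s' b
      have "continuous_on {0..} (\<lambda>t. boxplus T1 T2 c1 c2 t (Inl s) (Inl s') b)"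
        using U unfolding strongly_continuous_def by blast
      then show "continuous_on {0..} (\<lambda>t. T1 t s s' b)" by (simp add: boxplus_def)
    next
      fix s s' b
      have "continuous_on {0..} (\<lambda>t. boxplus T1 T2 c1 c2 t (Inr s) (Inr s') b)"
        using U unfolding strongly_continuous_def by blast
      then show "continuous_on {0..} (\<lambda>t. T2 t s s' b)" by (simp add: boxplus_def)
    qed
  next
    assume U: "strongly_continuous T1 \<and> strongly_continuous T2"
    show "strongly_continuous (boxplus T1 T2 c1 c2)"
      unfolding strongly_continuous_def
    proof (intro allI)
      fix x y b
      show "continuous_on {0..} (\<lambda>t. boxplus T1 T2 c1 c2 t x y b)"
      proof (cases x; cases y)
        fix s s' assume xy: "x = Inl s" "y = Inl s'"
        have "continuous_on {0..} (\<lambda>t. T1 t s s' b)" using U unfolding strongly_continuous_def by blast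
        then show ?thesis by (simp add: xy boxplus_def)
      next
        fix s s' assume xy: "x = Inl s" "y = Inr s'"
        have "continuous_on {0..} (\<lambda>t. cstar (c1 s t) * b * c2 s' t)"
          using c1 c2 by (intro cont_sandwich) auto
        then show ?thesis by (simp add: xy boxplus_def)
      next
        fix s s' assume xy: "x = Inr s" "y = Inl s'"
        have "continuous_on {0..} (\<lambda>t. cstar (c2 s t) * b * c1 s' t)"
          using c1 c2 by (intro cont_sandwich) auto
        then show ?thesis by (simp add: xy boxplus_def)
      next
        fix s s' assume xy: "x = Inr s" "y = Inr s'"
        have "continuous_on {0..} (\<lambda>t. T2 t s s' b)" using U unfolding strongly_continuous_def by blast
        then show ?thesis by (simp add: xy boxplus_def)
      qed
    qed
  qed
  show ?thesis using SP UNIT UC SC by blast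
qed


end
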